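(* Let $r:M\to M'$ be an epimorphism and $s:N'\to N$ a monomorphism in an abelian category $\mathcal{A}$. (1) If $N$ is strongly $M$-Rickart, then $N'$ is strongly $M'$-Rickart. (2) If $N$ is dual strongly $M$-Rickart, then $N'$ is dual strongly $M'$-Rickart.
   Context: A morphism $f:X\to Y$ is a section if $f'f=1_X$ for some $f'$, a retraction if $ff'=1_Y$ for some $f'$. A monomorphism $k:K\to X$ is fully invariant if for every $h:X\to X$ there is $\alpha:K\to K$ with $hk=k\alpha$; an epimorphism $c:X\to C$ is fully coinvariant if for every $h:X\to X$ there is $\gamma:C\to C$ with $ch=\gamma c$. For objects $M,N$: $N$ is strongly $M$-Rickart if the kernel ${\rm ker}(f)$ of every morphism $f:M\to N$ is a fully invariant section (of $M$); $N$ is dual strongly $M$-Rickart if the cokernel ${\rm coker}(f)$ of every morphism $f:M\to N$ is a fully coinvariant retraction (equivalently the image of $f$ is a fully invariant section of $N$). *)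

theory Defs
  imports Main
begin

text \<open>An abstract (small-data) category with additive structure, given by
  a set of objects, a set of morphisms, domain, codomain, identities,
  composition (comp g f = g after f), and hom-wise addition, negation and
  zero morphisms.\<close>

record ('o, 'm) acat =
  Obj  :: "'o set"
  Mor  :: "'m set"
  dom  :: "'m \<Rightarrow> 'o"
  cod  :: "'m \<Rightarrow> 'o"
  idm  :: "'o \<Rightarrow> 'm"
  comp :: "'m \<Rightarrow> 'm \<Rightarrow> 'm"
  add  :: "'m \<Rightarrow> 'm \<Rightarrow> 'm"
  neg  :: "'m \<Rightarrow> 'm"
  zero :: "'o \<Rightarrow> 'o \<Rightarrow> 'm"

definition hom :: "('o, 'm) acat \<Rightarrow> 'o \<Rightarrow> 'o \<Rightarrow> 'm set" where
  "hom C a b = {f \<in> Mor C. dom C f = a \<and> cod C f = b}"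

definition category :: "('o, 'm) acat \<Rightarrow> bool" where
  "category C \<longleftrightarrow>
     (\<forall>f \<in> Mor C. dom C f \<in> Obj C \<and> cod C f \<in> Obj C) \<and>
     (\<forall>a \<in> Obj C. idm C a \<in> hom C a a) \<and>
     (\<forall>f \<in> Mor C. \<forall>g \<in> Mor C. cod C f = dom C g \<longrightarrow>
         comp C g f \<in> hom C (dom C f) (cod C g)) \<and>
     (\<forall>f \<in> Mor C. comp C f (idm C (dom C f)) = f \<and> comp C (idm C (cod C f)) f = f) \<and>
     (\<forall>f \<in> Mor C. \<forall>g \<in> Mor C. \<forall>h \<in> Mor C.
         cod C f = dom C g \<and> cod C g = dom C h \<longrightarrow>
         comp C h (comp C g f) = comp C (comp C h g) f)"

definition preadditive :: "('o, 'm) acat \<Rightarrow> bool" where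
  "preadditive C \<longleftrightarrow>
     (\<forall>a \<in> Obj C. \<forall>b \<in> Obj C.
        zero C a b \<in> hom C a b \<and>
        (\<forall>f \<in> hom C a b. \<forall>g \<in> hom C a b. add C f g \<in> hom C a b) \<and>
        (\<forall>f \<in> hom C a b. neg C f \<in> hom C a b) \<and>
        (\<forall>f \<in> hom C a b. \<forall>g \<in> hom C a b. \<forall>h \<in> hom C a b.
            add C (add C f g) h = add C f (add C g h)) \<and>
        (\<forall>f \<in> hom C a b. \<forall>g \<in> hom C a b. add C f g = add C g f) \<and>
        (\<forall>f \<in> hom C a b. add C f (zero C a b) = f) \<and>
        (\<forall>f \<in> hom C a b. add C f (neg C f) = zero C a b)) \<and>
     (\<forall>a \<in> Obj C. \<forall>b \<in> Obj C. \<forall>c \<in> Obj C. \<forall>f \<in> hom C a b.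
        \<forall>g \<in> hom C b c. \<forall>g' \<in> hom C b c.
          comp C (add C g g') f = add C (comp C g f) (comp C g' f)) \<and>
     (\<forall>a \<in> Obj C. \<forall>b \<in> Obj C. \<forall>c \<in> Obj C. \<forall>g \<in> hom C a b.
        \<forall>g' \<in> hom C a b. \<forall>h \<in> hom C b c.
          comp C h (add C g g') = add C (comp C h g) (comp C h g'))"

definition has_zero_object :: "('o, 'm) acat \<Rightarrow> bool" where
  "has_zero_object C \<longleftrightarrow>
     (\<exists>z \<in> Obj C. \<forall>a \<in> Obj C. (\<exists>!f. f \<in> hom C z a) \<and> (\<exists>!f. f \<in> hom C a z))"

definition has_binary_products :: "('o, 'm) acat \<Rightarrow> bool" where
  "has_binary_products C \<longleftrightarrow>
     (\<forall>a \<in> Obj C. \<forall>b \<in> Obj C. \<exists>p \<in> Obj C. \<exists>p1 \<in> hom C p a. \<exists>p2 \<in> hom C p b.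
        \<forall>c \<in> Obj C. \<forall>f \<in> hom C c a. \<forall>g \<in> hom C c b.
          \<exists>!u. u \<in> hom C c p \<and> comp C p1 u = f \<and> comp C p2 u = g)"

definition is_mono :: "('o, 'm) acat \<Rightarrow> 'm \<Rightarrow> bool" where
  "is_mono C m \<longleftrightarrow> m \<in> Mor C \<and>
     (\<forall>g \<in> Mor C. \<forall>h \<in> Mor C. cod C g = dom C m \<and> cod C h = dom C m \<and>
        dom C g = dom C h \<and> comp C m g = comp C m h \<longrightarrow> g = h)"

definition is_epi :: "('o, 'm) acat \<Rightarrow> 'm \<Rightarrow> bool" where
  "is_epi C e \<longleftrightarrow> e \<in> Mor C \<and>
     (\<forall>g \<in> Mor C. \<forall>h \<in> Mor C. dom C g = cod C e \<and> dom C h = cod C e \<and>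
        cod C g = cod C h \<and> comp C g e = comp C h e \<longrightarrow> g = h)"

definition is_kernel :: "('o, 'm) acat \<Rightarrow> 'm \<Rightarrow> 'm \<Rightarrow> bool" where
  "is_kernel C k f \<longleftrightarrow> f \<in> Mor C \<and> k \<in> Mor C \<and> cod C k = dom C f \<and>
     comp C f k = zero C (dom C k) (cod C f) \<and>
     (\<forall>g \<in> Mor C. cod C g = dom C f \<and> comp C f g = zero C (dom C g) (cod C f) \<longrightarrow>
        (\<exists>!u. u \<in> hom C (dom C g) (dom C k) \<and> comp C k u = g))"

definition is_cokernel :: "('o, 'm) acat \<Rightarrow> 'm \<Rightarrow> 'm \<Rightarrow> bool" where
  "is_cokernel C c f \<longleftrightarrow> f \<in> Mor C \<and> c \<in> Mor C \<and> dom C c = cod C f \<and>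
     comp C c f = zero C (dom C f) (cod C c) \<and>
     (\<forall>g \<in> Mor C. dom C g = cod C f \<and> comp C g f = zero C (dom C f) (cod C g) \<longrightarrow>
        (\<exists>!u. u \<in> hom C (cod C c) (cod C g) \<and> comp C u c = g))"

definition abelian :: "('o, 'm) acat \<Rightarrow> bool" where
  "abelian C \<longleftrightarrow> category C \<and> preadditive C \<and> has_zero_object C \<and>
     has_binary_products C \<and>
     (\<forall>f \<in> Mor C. (\<exists>k. is_kernel C k f) \<and> (\<exists>c. is_cokernel C c f)) \<and>
     (\<forall>m. is_mono C m \<longrightarrow> (\<exists>f. is_kernel C m f)) \<and>
     (\<forall>e. is_epi C e \<longrightarrow> (\<exists>f. is_cokernel C e f))"

definition is_section :: "('o, 'm) acat \<Rightarrow> 'm \<Rightarrow> bool" where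
  "is_section C f \<longleftrightarrow> f \<in> Mor C \<and>
     (\<exists>f' \<in> hom C (cod C f) (dom C f). comp C f' f = idm C (dom C f))"

definition is_retraction :: "('o, 'm) acat \<Rightarrow> 'm \<Rightarrow> bool" where
  "is_retraction C f \<longleftrightarrow> f \<in> Mor C \<and>
     (\<exists>f' \<in> hom C (cod C f) (dom C f). comp C f f' = idm C (cod C f))"

definition fully_invariant :: "('o, 'm) acat \<Rightarrow> 'm \<Rightarrow> bool" where
  "fully_invariant C k \<longleftrightarrow> is_mono C k \<and>
     (\<forall>h \<in> hom C (cod C k) (cod C k). \<exists>\<alpha> \<in> hom C (dom C k) (dom C k).
        comp C h k = comp C k \<alpha>)"

definition fully_coinvariant :: "('o, 'm) acat \<Rightarrow> 'm \<Rightarrow> bool" where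
  "fully_coinvariant C c \<longleftrightarrow> is_epi C c \<and>
     (\<forall>h \<in> hom C (dom C c) (dom C c). \<exists>\<gamma> \<in> hom C (cod C c) (cod C c).
        comp C c h = comp C \<gamma> c)"

definition strongly_rickart :: "('o, 'm) acat \<Rightarrow> 'o \<Rightarrow> 'o \<Rightarrow> bool" where
  "strongly_rickart C M N \<longleftrightarrow>
     (\<forall>f \<in> hom C M N. \<forall>k. is_kernel C k f \<longrightarrow> is_section C k \<and> fully_invariant C k)"

definition dual_strongly_rickart :: "('o, 'm) acat \<Rightarrow> 'o \<Rightarrow> 'o \<Rightarrow> bool" where
  "dual_strongly_rickart C M N \<longleftrightarrow>
     (\<forall>f \<in> hom C M N. \<forall>c. is_cokernel C c f \<longrightarrow> is_retraction C c \<and> fully_coinvariant C c)"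

end

theory Submission
  imports Defs
begin


definition wab :: "('o, 'm) acat \<Rightarrow> bool" where
  "wab C \<longleftrightarrow> category C \<and> preadditive C \<and>
     (\<forall>f \<in> Mor C. (\<exists>k. is_kernel C k f) \<and> (\<exists>c. is_cokernel C c f)) \<and>
     (\<forall>m. is_mono C m \<longrightarrow> (\<exists>f. is_kernel C m f)) \<and>
     (\<forall>e. is_epi C e \<longrightarrow> (\<exists>f. is_cokernel C e f))"

locale wabl =
  fixes C :: "('o, 'm) acat"
  assumes W: "wab C"
begin

lemma cat: "category C" using W by (simp add: wab_def)
lemma pre: "preadditive C" using W by (simp add: wab_def)

lemma homD: "f \<in> hom C a b \<Longrightarrow> f \<in> Mor C \<and> dom C f = a \<and> cod C f = b"
  by (simp add: hom_def)

lemma hom_obj: "f \<in> hom C a b \<Longrightarrow> a \<in> Obj C \<and> b \<in> Obj C"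
  using cat unfolding category_def hom_def by auto

lemma comp_hom: "f \<in> hom C a b \<Longrightarrow> g \<in> hom C b c \<Longrightarrow> comp C g f \<in> hom C a c"
  using cat unfolding category_def hom_def by auto

lemma assoc: "f \<in> hom C a b \<Longrightarrow> g \<in> hom C b c \<Longrightarrow> h \<in> hom C c d \<Longrightarrow>
   comp C h (comp C g f) = comp C (comp C h g) f"
  using cat unfolding category_def hom_def by auto

lemma id_hom: "a \<in> Obj C \<Longrightarrow> idm C a \<in> hom C a a"
  using cat unfolding category_def by auto

lemma idl: "f \<in> hom C a b \<Longrightarrow> comp C (idm C b) f = f"
  using cat unfolding category_def hom_def by auto

lemma idr: "f \<in> hom C a b \<Longrightarrow> comp C f (idm C a) = f"
  using cat unfolding category_def hom_def by auto

lemma zero_hom: "a \<in> Obj C \<Longrightarrow> b \<in> Obj C \<Longrightarrow> zero C a b \<in> hom C a b"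
  using pre unfolding preadditive_def by auto

lemma add_hom: "f \<in> hom C a b \<Longrightarrow> g \<in> hom C a b \<Longrightarrow> add C f g \<in> hom C a b"
  using pre hom_obj[of f a b] unfolding preadditive_def by auto

lemma neg_hom: "f \<in> hom C a b \<Longrightarrow> neg C f \<in> hom C a b"
  using pre hom_obj[of f a b] unfolding preadditive_def by auto

lemma add_assoc: assumes "f \<in> hom C a b" "g \<in> hom C a b" "h \<in> hom C a b"
  shows "add C (add C f g) h = add C f (add C g h)"
proof -
  have ab: "a \<in> Obj C" "b \<in> Obj C" using hom_obj assms(1) by auto
  note P1 = pre[unfolded preadditive_def, THEN conjunct1]
  have Q: "zero C a b \<in> hom C a b \<and>
        (\<forall>f\<in>hom C a b. \<forall>g\<in>hom C a b. add C f g \<in> hom C a b) \<and>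
        (\<forall>f\<in>hom C a b. neg C f \<in> hom C a b) \<and>
        (\<forall>f\<in>hom C a b. \<forall>g\<in>hom C a b. \<forall>h\<in>hom C a b.
            add C (add C f g) h = add C f (add C g h)) \<and>
        (\<forall>f\<in>hom C a b. \<forall>g\<in>hom C a b. add C f g = add C g f) \<and>
        (\<forall>f\<in>hom C a b. add C f (zero C a b) = f) \<and>
        (\<forall>f\<in>hom C a b. add C f (neg C f) = zero C a b)"
    by (rule bspec[OF bspec[OF P1 ab(1)] ab(2)])
  have "\<forall>f\<in>hom C a b. \<forall>g\<in>hom C a b. \<forall>h\<in>hom C a b. add C (add C f g) h = add C f (add C g h)"
    using Q by (elim conjE)
  then show ?thesis using assms by blast
qed

lemma add_comm: "f \<in> hom C a b \<Longrightarrow> g \<in> hom C a b \<Longrightarrow> add C f g = add C g f"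
  using pre hom_obj[of f a b] unfolding preadditive_def by auto

lemma add_zero: "f \<in> hom C a b \<Longrightarrow> add C f (zero C a b) = f"
  using pre hom_obj[of f a b] unfolding preadditive_def by auto

lemma zero_add: "f \<in> hom C a b \<Longrightarrow> add C (zero C a b) f = f"
  using add_zero add_comm[OF zero_hom[OF hom_obj[THEN conjunct1] hom_obj[THEN conjunct2]]] by simp

lemma add_neg: "f \<in> hom C a b \<Longrightarrow> add C f (neg C f) = zero C a b"
  using pre hom_obj[of f a b] unfolding preadditive_def by auto

lemma distl: "f \<in> hom C a b \<Longrightarrow> g \<in> hom C b c \<Longrightarrow> g' \<in> hom C b c \<Longrightarrow>
   comp C (add C g g') f = add C (comp C g f) (comp C g' f)"
  using pre hom_obj[of f a b] hom_obj[of g b c] unfolding preadditive_def by auto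

lemma distr: "g \<in> hom C a b \<Longrightarrow> g' \<in> hom C a b \<Longrightarrow> h \<in> hom C b c \<Longrightarrow>
   comp C h (add C g g') = add C (comp C h g) (comp C h g')"
  using pre hom_obj[of g a b] hom_obj[of h b c] unfolding preadditive_def by auto

lemma idem_zero: assumes "f \<in> hom C a b" "add C f f = f" shows "f = zero C a b"
proof -
  have "zero C a b = add C f (neg C f)" using add_neg assms by simp
  also have "\<dots> = add C (add C f f) (neg C f)" using assms by simp
  also have "\<dots> = add C f (add C f (neg C f))" using add_assoc neg_hom assms by blast
  also have "\<dots> = f" using add_neg add_zero assms by simp
  finally show ?thesis by simp
qed

lemma zero_comp: assumes "f \<in> hom C a b" "c \<in> Obj C"
  shows "comp C (zero C b c) f = zero C a c"
proof -
  have z: "zero C b c \<in> hom C b c" using zero_hom hom_obj assms by blast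
  have x: "comp C (zero C b c) f \<in> hom C a c" using comp_hom z assms by blast
  have "comp C (zero C b c) f = comp C (add C (zero C b c) (zero C b c)) f"
    using add_zero z by simp
  also have "\<dots> = add C (comp C (zero C b c) f) (comp C (zero C b c) f)"
    using distl z assms by blast
  finally have E: "comp C (zero C b c) f = add C (comp C (zero C b c) f) (comp C (zero C b c) f)" .
  show ?thesis using idem_zero[OF x E[symmetric]] by simp
qed

lemma comp_zero: assumes "h \<in> hom C b c" "a \<in> Obj C"
  shows "comp C h (zero C a b) = zero C a c"
proof -
  have z: "zero C a b \<in> hom C a b" using zero_hom hom_obj assms by blast
  have x: "comp C h (zero C a b) \<in> hom C a c" using comp_hom z assms by blast
  have "comp C h (zero C a b) = comp C h (add C (zero C a b) (zero C a b))"
    using add_zero z by simp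
  also have "\<dots> = add C (comp C h (zero C a b)) (comp C h (zero C a b))"
    using distr z assms by blast
  finally have E: "comp C h (zero C a b) = add C (comp C h (zero C a b)) (comp C h (zero C a b))" .
  show ?thesis using idem_zero[OF x E[symmetric]] by simp
qed

lemma neg_unique: assumes "f \<in> hom C a b" "g \<in> hom C a b" "add C f g = zero C a b"
  shows "g = neg C f"
proof -
  have n: "neg C f \<in> hom C a b" using neg_hom assms by blast
  have "g = add C (zero C a b) g" using zero_add assms by simp
  also have "\<dots> = add C (add C (neg C f) f) g"
    using add_neg[OF assms(1)] add_comm[OF n assms(1)] by simp
  also have "\<dots> = add C (neg C f) (add C f g)" using add_assoc n assms by blast
  also have "\<dots> = neg C f" using assms add_zero n by simp
  finally show ?thesis .
qed

lemma comp_neg: assumes "g \<in> hom C a b" "h \<in> hom C b c"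
  shows "comp C h (neg C g) = neg C (comp C h g)"
proof -
  have n: "neg C g \<in> hom C a b" using neg_hom assms by blast
  have "add C (comp C h g) (comp C h (neg C g)) = comp C h (add C g (neg C g))"
    using distr[OF assms(1) n assms(2)] by simp
  also have "\<dots> = zero C a c" using add_neg[OF assms(1)] comp_zero[OF assms(2) hom_obj[OF assms(1), THEN conjunct1]] by simp
  finally show ?thesis using neg_unique[OF comp_hom[OF assms] comp_hom[OF n assms(2)]] by simp
qed

lemma neg_comp: assumes "f \<in> hom C a b" "g \<in> hom C b c"
  shows "comp C (neg C g) f = neg C (comp C g f)"
proof -
  have n: "neg C g \<in> hom C b c" using neg_hom assms by blast
  have "add C (comp C g f) (comp C (neg C g) f) = comp C (add C g (neg C g)) f"
    using distl[OF assms(1) assms(2) n] by simp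
  also have "\<dots> = zero C a c" using add_neg[OF assms(2)] zero_comp[OF assms(1) hom_obj[OF assms(2), THEN conjunct2]] by simp
  finally show ?thesis using neg_unique[OF comp_hom[OF assms] comp_hom[OF assms(1) n]] by simp
qed

lemma neg_zero: assumes "a \<in> Obj C" "b \<in> Obj C" shows "neg C (zero C a b) = zero C a b"
  using neg_unique[OF zero_hom[OF assms] zero_hom[OF assms] add_zero[OF zero_hom[OF assms]]] by simp

lemma epi_cancel: "is_epi C e \<Longrightarrow> e \<in> hom C a b \<Longrightarrow> g \<in> hom C b c \<Longrightarrow> h \<in> hom C b c \<Longrightarrow>
   comp C g e = comp C h e \<Longrightarrow> g = h"
  unfolding is_epi_def hom_def by auto

lemma mono_cancel: "is_mono C m \<Longrightarrow> m \<in> hom C b c \<Longrightarrow> g \<in> hom C a b \<Longrightarrow> h \<in> hom C a b \<Longrightarrow>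
   comp C m g = comp C m h \<Longrightarrow> g = h"
  unfolding is_mono_def hom_def by auto

lemma kernel_hom: "is_kernel C k f \<Longrightarrow> f \<in> hom C a b \<Longrightarrow> k \<in> hom C (dom C k) a"
  unfolding is_kernel_def hom_def by (elim conjE) simp

lemma kernel_zero: "is_kernel C k f \<Longrightarrow> f \<in> hom C a b \<Longrightarrow> comp C f k = zero C (dom C k) b"
  unfolding is_kernel_def hom_def by (elim conjE) simp

lemma kernel_factor: assumes kk: "is_kernel C k f" and f: "f \<in> hom C a b" and g: "g \<in> hom C x a"
   and z: "comp C f g = zero C x b" shows "\<exists>u \<in> hom C x (dom C k). comp C k u = g"
proof -
  have U: "\<forall>g \<in> Mor C. cod C g = dom C f \<and> comp C f g = zero C (dom C g) (cod C f) \<longrightarrow>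
        (\<exists>!u. u \<in> hom C (dom C g) (dom C k) \<and> comp C k u = g)"
    using kk unfolding is_kernel_def by (elim conjE)
  have gm: "g \<in> Mor C" "cod C g = dom C f" "dom C g = x" "cod C f = b"
    using f g unfolding hom_def by auto
  have "\<exists>!u. u \<in> hom C (dom C g) (dom C k) \<and> comp C k u = g"
    using bspec[OF U gm(1)] gm z by simp
  then show ?thesis using gm(3) by blast
qed

lemma kernel_mono: assumes "is_kernel C k f" shows "is_mono C k"
  unfolding is_mono_def
proof (intro conjI ballI impI)
  show "k \<in> Mor C" using assms unfolding is_kernel_def by (elim conjE)
  fix g h assume g: "g \<in> Mor C" and h: "h \<in> Mor C" and
    e: "cod C g = dom C k \<and> cod C h = dom C k \<and> dom C g = dom C h \<and> comp C k g = comp C k h"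
  have f: "f \<in> hom C (cod C k) (cod C f)" and k: "k \<in> hom C (dom C k) (cod C k)"
    using assms unfolding is_kernel_def hom_def by (elim conjE, simp)+
  have gh: "g \<in> hom C (dom C g) (dom C k)" "h \<in> hom C (dom C g) (dom C k)"
    using g h e unfolding hom_def by auto
  have kg: "comp C k g \<in> hom C (dom C g) (cod C k)" using comp_hom gh k by blast
  have "comp C f (comp C k g) = comp C (comp C f k) g" using assoc gh k f by blast
  also have "\<dots> = zero C (dom C g) (cod C f)"
    using kernel_zero[OF assms f] zero_comp[OF gh(1)] hom_obj[OF f] by simp
  finally have z: "comp C f (comp C k g) = zero C (dom C g) (cod C f)" .
  have U: "\<forall>g \<in> Mor C. cod C g = dom C f \<and> comp C f g = zero C (dom C g) (cod C f) \<longrightarrow>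
        (\<exists>!u. u \<in> hom C (dom C g) (dom C k) \<and> comp C k u = g)"
    using assms unfolding is_kernel_def by (elim conjE)
  have "\<exists>!u. u \<in> hom C (dom C (comp C k g)) (dom C k) \<and> comp C k u = comp C k g"
    using bspec[OF U homD[OF kg, THEN conjunct1]] homD[OF kg] homD[OF f] z by simp
  then show "g = h" using gh e homD[OF kg] by auto
qed

lemma cok_hom: "is_cokernel C c f \<Longrightarrow> f \<in> hom C a b \<Longrightarrow> c \<in> hom C b (cod C c)"
  unfolding is_cokernel_def hom_def by (elim conjE) simp

lemma cok_zero: "is_cokernel C c f \<Longrightarrow> f \<in> hom C a b \<Longrightarrow> comp C c f = zero C a (cod C c)"
  unfolding is_cokernel_def hom_def by (elim conjE) simp

lemma cok_factor: assumes cc: "is_cokernel C c f" and f: "f \<in> hom C a b" and g: "g \<in> hom C b y"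
   and z: "comp C g f = zero C a y" shows "\<exists>u \<in> hom C (cod C c) y. comp C u c = g"
proof -
  have U: "\<forall>g \<in> Mor C. dom C g = cod C f \<and> comp C g f = zero C (dom C f) (cod C g) \<longrightarrow>
        (\<exists>!u. u \<in> hom C (cod C c) (cod C g) \<and> comp C u c = g)"
    using cc unfolding is_cokernel_def by (elim conjE)
  have gm: "g \<in> Mor C" "dom C g = cod C f" "cod C g = y" "dom C f = a"
    using f g unfolding hom_def by auto
  have "\<exists>!u. u \<in> hom C (cod C c) (cod C g) \<and> comp C u c = g"
    using bspec[OF U gm(1)] gm z by simp
  then show ?thesis using gm(3) by blast
qed

lemma ker_ex: "f \<in> Mor C \<Longrightarrow> \<exists>k. is_kernel C k f" using W unfolding wab_def by auto
lemma epi_cok: "is_epi C e \<Longrightarrow> \<exists>f. is_cokernel C e f" using W unfolding wab_def by auto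

end


context wabl
begin

abbreviation cp (infixr "\<cdot>" 75) where "g \<cdot> f \<equiv> comp C g f"

lemma part1:
  assumes M: "M \<in> Obj C" and M': "M' \<in> Obj C" and N: "N \<in> Obj C" and N': "N' \<in> Obj C"
    and r: "r \<in> hom C M M'" and repi: "is_epi C r"
    and s: "s \<in> hom C N' N" and smono: "is_mono C s"
    and SR: "strongly_rickart C M N"
  shows "strongly_rickart C M' N'"
  unfolding strongly_rickart_def
proof (intro ballI allI impI)
  fix f k assume f: "f \<in> hom C M' N'" and kk: "is_kernel C k f"
  define K' where "K' = dom C k"
  have k: "k \<in> hom C K' M'" using kernel_hom[OF kk f] K'_def by simp
  have kmono: "is_mono C k" using kernel_mono kk by blast
  have fk: "f \<cdot> k = zero C K' N'" using kernel_zero[OF kk f] K'_def by simp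
  have K': "K' \<in> Obj C" using hom_obj k by blast
  define g where "g = s \<cdot> (f \<cdot> r)"
  have fr: "f \<cdot> r \<in> hom C M N'" using comp_hom r f by blast
  have g: "g \<in> hom C M N" using comp_hom fr s g_def by blast
  obtain k0 where kk0: "is_kernel C k0 g" using ker_ex g homD by blast
  define K where "K = dom C k0"
  have k0: "k0 \<in> hom C K M" using kernel_hom[OF kk0 g] K_def by simp
  have K: "K \<in> Obj C" using hom_obj k0 by blast
  have gk0: "g \<cdot> k0 = zero C K N" using kernel_zero[OF kk0 g] K_def by simp
  have sec: "is_section C k0" and fi0: "fully_invariant C k0"
    using SR g kk0 unfolding strongly_rickart_def by auto
  obtain p where p: "p \<in> hom C M K" and pk0: "p \<cdot> k0 = idm C K"
    using sec k0 homD[OF k0] unfolding is_section_def K_def by auto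
  have fac: "\<exists>w \<in> hom C X K. k0 \<cdot> w = z"
    if z: "z \<in> hom C X M" and fz: "f \<cdot> (r \<cdot> z) = zero C X N'" for X z
  proof -
    have X: "X \<in> Obj C" using hom_obj z by blast
    have "g \<cdot> z = s \<cdot> (f \<cdot> (r \<cdot> z))"
      by (simp add: g_def assoc[OF z r f] assoc[OF z fr s])
    also have "\<dots> = zero C X N" using fz comp_zero s X by simp
    finally show ?thesis using kernel_factor[OF kk0 g z] K_def by simp
  qed
  have rk0: "r \<cdot> k0 \<in> hom C K M'" using comp_hom k0 r by blast
  have frk0h: "f \<cdot> (r \<cdot> k0) \<in> hom C K N'" using comp_hom rk0 f by blast
  have "s \<cdot> (f \<cdot> (r \<cdot> k0)) = g \<cdot> k0"
    by (simp add: g_def assoc[OF k0 r f] assoc[OF k0 fr s])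
  also have "\<dots> = s \<cdot> zero C K N'" using gk0 comp_zero s K by simp
  finally have frk0: "f \<cdot> (r \<cdot> k0) = zero C K N'"
    using mono_cancel[OF smono s frk0h] zero_hom K N' by blast
  obtain q where q: "q \<in> hom C K K'" and kq: "k \<cdot> q = r \<cdot> k0"
    using kernel_factor[OF kk f rk0 frk0] K'_def by auto
  define e where "e = k0 \<cdot> p"
  have e: "e \<in> hom C M M" using comp_hom p k0 e_def by blast
  obtain t where tt: "is_cokernel C r t" using epi_cok repi by blast
  define T where "T = dom C t"
  have t: "t \<in> hom C T M" using tt r T_def unfolding is_cokernel_def hom_def by auto
  have T: "T \<in> Obj C" using hom_obj t by blast
  have rt: "r \<cdot> t = zero C T M'" using cok_zero[OF tt t] homD[OF r] by simp
  have "f \<cdot> (r \<cdot> t) = zero C T N'" using rt comp_zero f T by simp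
  then obtain w where w: "w \<in> hom C T K" and k0w: "k0 \<cdot> w = t" using fac t by blast
  have kw: "k0 \<cdot> w \<in> hom C T M" using comp_hom w k0 by blast
  have et: "e \<cdot> t = t"
    using k0w e_def assoc[OF kw p k0, symmetric] assoc[OF w k0 p] pk0 idl[OF w] by simp
  have re: "r \<cdot> e \<in> hom C M M'" using comp_hom e r by blast
  have "(r \<cdot> e) \<cdot> t = zero C T M'" using assoc[OF t e r, symmetric] et rt by simp
  then obtain e' where e': "e' \<in> hom C M' M'" and e'r: "e' \<cdot> r = r \<cdot> e"
    using cok_factor[OF tt t re] homD[OF r] by auto
  have fe'h: "f \<cdot> e' \<in> hom C M' N'" using comp_hom e' f by blast
  have "(f \<cdot> e') \<cdot> r = f \<cdot> (r \<cdot> (k0 \<cdot> p))"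
    using assoc[OF r e' f, symmetric] e'r e_def by simp
  also have "\<dots> = (f \<cdot> (r \<cdot> k0)) \<cdot> p"
    using assoc[OF p k0 r] assoc[OF p rk0 f] by simp
  also have "\<dots> = zero C M N'" using frk0 zero_comp[OF p N'] by simp
  also have "\<dots> = zero C M' N' \<cdot> r" using zero_comp[OF r N'] by simp
  finally have fe': "f \<cdot> e' = zero C M' N'"
    using epi_cancel[OF repi r fe'h] zero_hom M' N' by blast
  obtain k' where k': "k' \<in> hom C M' K'" and kk': "k \<cdot> k' = e'"
    using kernel_factor[OF kk f e' fe'] K'_def by auto
  obtain l where ll: "is_kernel C l p" using ker_ex p homD by blast
  define L where "L = dom C l"
  have l: "l \<in> hom C L M" using kernel_hom[OF ll p] L_def by simp
  have L: "L \<in> Obj C" using hom_obj l by blast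
  have lmono: "is_mono C l" using kernel_mono ll by blast
  have pl: "p \<cdot> l = zero C L K" using kernel_zero[OF ll p] L_def by simp
  define d where "d = add C (idm C M) (neg C e)"
  have iM: "idm C M \<in> hom C M M" using id_hom M by blast
  have ne: "neg C e \<in> hom C M M" using neg_hom e by blast
  have d: "d \<in> hom C M M" using add_hom iM ne d_def by blast
  have pe: "p \<cdot> e = p" using e_def assoc[OF p k0 p] pk0 idl[OF p] by simp
  have "p \<cdot> d = add C p (neg C p)"
    using d_def distr[OF iM ne p] idr[OF p] comp_neg[OF e p] pe by simp
  also have "\<dots> = zero C M K" using add_neg p by blast
  finally obtain pL where pL: "pL \<in> hom C M L" and lpL: "l \<cdot> pL = d"
    using kernel_factor[OF ll p d] L_def by auto
  have sumI: "add C e (l \<cdot> pL) = idm C M"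
  proof -
    have "add C e d = add C e (add C (neg C e) (idm C M))" using d_def add_comm[OF iM ne] by simp
    also have "\<dots> = add C (add C e (neg C e)) (idm C M)" using add_assoc[OF e ne iM] by simp
    also have "\<dots> = idm C M" using add_neg[OF e] zero_add[OF iM] by simp
    finally show ?thesis using lpL by simp
  qed
  have pLk0h: "pL \<cdot> k0 \<in> hom C K L" using comp_hom k0 pL by blast
  have ek0: "e \<cdot> k0 = k0" using e_def assoc[OF k0 p k0, symmetric] pk0 idr[OF k0] by simp
  have "l \<cdot> (pL \<cdot> k0) = d \<cdot> k0" using assoc[OF k0 pL l] lpL by simp
  also have "\<dots> = add C k0 (neg C k0)"
    using d_def distl[OF k0 iM ne] idl[OF k0] neg_comp[OF k0 e] ek0 by simp
  also have "\<dots> = l \<cdot> zero C K L" using add_neg[OF k0] comp_zero[OF l K] by simp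
  finally have pLk0: "pL \<cdot> k0 = zero C K L"
    using mono_cancel[OF lmono l pLk0h] zero_hom K L by blast
  have "pL \<cdot> t = zero C T L"
    using k0w assoc[OF w k0 pL] pLk0 zero_comp[OF w L] by metis
  then obtain \<sigma> where \<sigma>: "\<sigma> \<in> hom C M' L" and \<sigma>r: "\<sigma> \<cdot> r = pL"
    using cok_factor[OF tt t pL] homD[OF r] by auto
  define \<rho> where "\<rho> = r \<cdot> (l \<cdot> \<sigma>)"
  have l\<sigma>: "l \<cdot> \<sigma> \<in> hom C M' M" using comp_hom \<sigma> l by blast
  have \<rho>: "\<rho> \<in> hom C M' M'" using comp_hom l\<sigma> r \<rho>_def by blast
  have iM': "idm C M' \<in> hom C M' M'" using id_hom M' by blast
  have ae\<rho>: "add C e' \<rho> \<in> hom C M' M'" using add_hom e' \<rho> by blast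
  have \<rho>r: "\<rho> \<cdot> r = r \<cdot> (l \<cdot> pL)"
    using \<rho>_def assoc[OF r l\<sigma> r, symmetric] assoc[OF r \<sigma> l, symmetric] \<sigma>r by simp
  have lpLh: "l \<cdot> pL \<in> hom C M M" using comp_hom pL l by blast
  have "add C e' \<rho> \<cdot> r = add C (r \<cdot> e) (r \<cdot> (l \<cdot> pL))"
    using distl[OF r e' \<rho>] e'r \<rho>r by simp
  also have "\<dots> = r" using distr[OF e lpLh r, symmetric] sumI idr[OF r] by simp
  also have "\<dots> = idm C M' \<cdot> r" using idl[OF r] by simp
  finally have one: "add C e' \<rho> = idm C M'"
    using epi_cancel[OF repi r ae\<rho> iM'] by blast
  have pLl: "pL \<cdot> l = idm C L"
  proof -
    have pLlh: "pL \<cdot> l \<in> hom C L L" using comp_hom l pL by blast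
    have el: "e \<cdot> l = zero C L M" using e_def assoc[OF l p k0, symmetric] pl comp_zero[OF k0 L] by simp
    have "l \<cdot> (pL \<cdot> l) = d \<cdot> l" using assoc[OF l pL l] lpL by simp
    also have "\<dots> = l" using d_def distl[OF l iM ne] idl[OF l] neg_comp[OF l e] el
        neg_zero[OF L M] add_zero[OF l] by simp
    also have "\<dots> = l \<cdot> idm C L" using idr[OF l] by simp
    finally show ?thesis using mono_cancel[OF lmono l pLlh] id_hom L by blast
  qed
  have lemA: "z = zero C X L" if z: "z \<in> hom C X L" and fz: "f \<cdot> (r \<cdot> (l \<cdot> z)) = zero C X N'" for X z
  proof -
    have lz: "l \<cdot> z \<in> hom C X M" using comp_hom z l by blast
    obtain v where v: "v \<in> hom C X K" and k0v: "k0 \<cdot> v = l \<cdot> z" using fac[OF lz fz] by blast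
    have X: "X \<in> Obj C" using hom_obj z by blast
    have "z = (pL \<cdot> l) \<cdot> z" using pLl idl[OF z] by simp
    also have "\<dots> = pL \<cdot> (k0 \<cdot> v)" using assoc[OF z l pL] k0v by simp
    also have "\<dots> = zero C X L" using assoc[OF v k0 pL] pLk0 zero_comp[OF v L] by simp
    finally show ?thesis .
  qed
  have f\<rho>: "f \<cdot> \<rho> = f"
  proof -
    have f\<rho>h: "f \<cdot> \<rho> \<in> hom C M' N'" using comp_hom \<rho> f by blast
    have "f = f \<cdot> add C e' \<rho>" using one idr[OF f] by simp
    also have "\<dots> = f \<cdot> \<rho>" using distr[OF e' \<rho> f] fe' zero_add[OF f\<rho>h] by simp
    finally show ?thesis by simp
  qed
  have \<rho>y: "r \<cdot> (l \<cdot> (\<sigma> \<cdot> y)) = \<rho> \<cdot> y" if y: "y \<in> hom C X M'" for X y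
    using \<rho>_def assoc[OF y \<sigma> l] assoc[OF y l\<sigma> r] by simp
  have \<sigma>ker: "\<sigma> \<cdot> y = zero C X L" if y: "y \<in> hom C X M'" and fy: "f \<cdot> y = zero C X N'" for X y
  proof -
    have \<sigma>y: "\<sigma> \<cdot> y \<in> hom C X L" using comp_hom y \<sigma> by blast
    have "f \<cdot> (r \<cdot> (l \<cdot> (\<sigma> \<cdot> y))) = (f \<cdot> \<rho>) \<cdot> y" using \<rho>y[OF y] assoc[OF y \<rho> f] by simp
    also have "\<dots> = zero C X N'" using f\<rho> fy by simp
    finally show ?thesis using lemA[OF \<sigma>y] by blast
  qed
  have \<sigma>k: "\<sigma> \<cdot> k = zero C K' L" using \<sigma>ker[OF k fk] .
  have \<rho>k: "\<rho> \<cdot> k = zero C K' M'"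
    using \<rho>y[OF k] \<sigma>k comp_zero[OF l K'] comp_zero[OF r K'] by simp
  have e'kh: "e' \<cdot> k \<in> hom C K' M'" using comp_hom k e' by blast
  have "k = add C e' \<rho> \<cdot> k" using one idl[OF k] by simp
  also have "\<dots> = e' \<cdot> k" using distl[OF k e' \<rho>] \<rho>k add_zero[OF e'kh] by simp
  also have "\<dots> = k \<cdot> (k' \<cdot> k)" using kk' assoc[OF k k' k] by simp
  finally have k'k: "k' \<cdot> k = idm C K'"
    using mono_cancel[OF kmono k, of "k' \<cdot> k" K' "idm C K'"] comp_hom[OF k k'] id_hom[OF K'] idr[OF k]
    by metis
  have secK: "is_section C k"
    unfolding is_section_def using k' k'k homD[OF k] by auto
  have qp: "q \<cdot> p = k' \<cdot> r"
  proof -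
    have qph: "q \<cdot> p \<in> hom C M K'" using comp_hom p q by blast
    have k'rh: "k' \<cdot> r \<in> hom C M K'" using comp_hom r k' by blast
    have "k \<cdot> (q \<cdot> p) = (r \<cdot> k0) \<cdot> p" using assoc[OF p q k] kq by simp
    also have "\<dots> = e' \<cdot> r" using assoc[OF p k0 r, symmetric] e_def e'r by simp
    also have "\<dots> = k \<cdot> (k' \<cdot> r)" using kk' assoc[OF r k' k] by simp
    finally show ?thesis using mono_cancel[OF kmono k qph k'rh] by blast
  qed
  have qepi: "a = b" if a: "a \<in> hom C K' X" and b: "b \<in> hom C K' X" and ab: "a \<cdot> q = b \<cdot> q" for a b X
  proof -
    have ak'h: "a \<cdot> k' \<in> hom C M' X" using comp_hom k' a by blast
    have bk'h: "b \<cdot> k' \<in> hom C M' X" using comp_hom k' b by blast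
    have "(a \<cdot> k') \<cdot> r = (a \<cdot> q) \<cdot> p"
      using assoc[OF r k' a, symmetric] qp assoc[OF p q a] by simp
    also have "\<dots> = (b \<cdot> k') \<cdot> r"
      using ab assoc[OF r k' b, symmetric] qp assoc[OF p q b] by simp
    finally have "a \<cdot> k' = b \<cdot> k'" using epi_cancel[OF repi r ak'h bk'h] by blast
    then have "a \<cdot> (k' \<cdot> k) = b \<cdot> (k' \<cdot> k)" using assoc[OF k k' a] assoc[OF k k' b] by simp
    then show ?thesis using k'k idr[OF a] idr[OF b] by simp
  qed
  have fiK: "fully_invariant C k"
    unfolding fully_invariant_def
  proof (intro conjI kmono ballI)
    fix h assume h0: "h \<in> hom C (cod C k) (cod C k)"
    have h: "h \<in> hom C M' M'" using h0 homD[OF k] by simp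
    have hrk0: "h \<cdot> (r \<cdot> k0) \<in> hom C K M'" using comp_hom rk0 h by blast
    define \<beta> where "\<beta> = \<sigma> \<cdot> (h \<cdot> (r \<cdot> k0))"
    have \<beta>: "\<beta> \<in> hom C K L" using comp_hom hrk0 \<sigma> \<beta>_def by blast
    have \<beta>p: "\<beta> \<cdot> p \<in> hom C M L" using comp_hom p \<beta> by blast
    have \<phi>: "l \<cdot> (\<beta> \<cdot> p) \<in> hom C M M" using comp_hom \<beta>p l by blast
    obtain \<alpha> where \<alpha>: "\<alpha> \<in> hom C K K" and \<phi>k0: "(l \<cdot> (\<beta> \<cdot> p)) \<cdot> k0 = k0 \<cdot> \<alpha>"
      using fi0 \<phi> homD[OF k0] unfolding fully_invariant_def K_def by auto
    have "l \<cdot> \<beta> = k0 \<cdot> \<alpha>"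
      using \<phi>k0 assoc[OF k0 \<beta>p l, symmetric] assoc[OF k0 p \<beta>, symmetric] pk0 idr[OF \<beta>] by simp
    then have "\<beta> = (pL \<cdot> k0) \<cdot> \<alpha>"
      using assoc[OF \<beta> l pL] pLl idl[OF \<beta>] assoc[OF \<alpha> k0 pL] by simp
    then have \<beta>0: "\<beta> = zero C K L" using pLk0 zero_comp[OF \<alpha> L] by simp
    have hk: "h \<cdot> k \<in> hom C K' M'" using comp_hom k h by blast
    have \<sigma>hk: "\<sigma> \<cdot> (h \<cdot> k) \<in> hom C K' L" using comp_hom hk \<sigma> by blast
    have "(\<sigma> \<cdot> (h \<cdot> k)) \<cdot> q = \<beta>"
      using \<beta>_def assoc[OF q hk \<sigma>, symmetric] assoc[OF q k h, symmetric] kq by simp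
    also have "\<dots> = zero C K' L \<cdot> q" using \<beta>0 zero_comp[OF q L] by simp
    finally have "\<sigma> \<cdot> (h \<cdot> k) = zero C K' L"
      using qepi[OF \<sigma>hk] zero_hom K' L by blast
    then have "f \<cdot> (h \<cdot> k) = zero C K' N'"
      using \<sigma>ker[OF hk] \<rho>y[OF hk] f\<rho> assoc[OF hk \<rho> f] comp_zero[OF l K'] comp_zero[OF r K']
        comp_zero[OF f K'] by metis
    then obtain \<alpha>' where "\<alpha>' \<in> hom C K' K'" "k \<cdot> \<alpha>' = h \<cdot> k"
      using kernel_factor[OF kk f hk] K'_def by auto
    then show "\<exists>\<alpha>\<in>hom C (dom C k) (dom C k). h \<cdot> k = k \<cdot> \<alpha>" using K'_def by metis
  qed
  show "is_section C k \<and> fully_invariant C k" using secK fiK by blast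
qed

end


definition opc :: "('o, 'm) acat \<Rightarrow> ('o, 'm) acat" where
  "opc C = C\<lparr>dom := cod C, cod := dom C, comp := (\<lambda>g f. comp C f g), zero := (\<lambda>a b. zero C b a)\<rparr>"

lemma opc_simps[simp]: "Obj (opc C) = Obj C" "Mor (opc C) = Mor C" "dom (opc C) = cod C"
  "cod (opc C) = dom C" "idm (opc C) = idm C" "comp (opc C) g f = comp C f g"
  "add (opc C) = add C" "neg (opc C) = neg C" "zero (opc C) a b = zero C b a"
  by (simp_all add: opc_def)

lemma hom_op[simp]: "hom (opc C) a b = hom C b a" by (auto simp: hom_def)

lemma mono_op: "is_mono (opc C) m = is_epi C m"
  unfolding is_mono_def is_epi_def by auto
lemma epi_op: "is_epi (opc C) m = is_mono C m"
  unfolding is_mono_def is_epi_def by auto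
lemma kernel_op: "is_kernel (opc C) k f = is_cokernel C k f"
  unfolding is_kernel_def is_cokernel_def by simp
lemma cokernel_op: "is_cokernel (opc C) k f = is_kernel C k f"
  unfolding is_kernel_def is_cokernel_def by simp
lemma section_op: "is_section (opc C) f = is_retraction C f"
  unfolding is_section_def is_retraction_def by simp
lemma fi_op: "fully_invariant (opc C) k = fully_coinvariant C k"
  unfolding fully_invariant_def fully_coinvariant_def by (simp add: mono_op)
lemma sr_op: "strongly_rickart (opc C) N M = dual_strongly_rickart C M N"
  unfolding strongly_rickart_def dual_strongly_rickart_def
  by (simp add: kernel_op section_op fi_op)

lemma cat_op: assumes "category C" shows "category (opc C)"
proof -
  note P = assms[unfolded category_def]
  note P1 = P[THEN conjunct1] and P2 = P[THEN conjunct2, THEN conjunct1]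
    and P3 = P[THEN conjunct2, THEN conjunct2, THEN conjunct1]
    and P4 = P[THEN conjunct2, THEN conjunct2, THEN conjunct2, THEN conjunct1]
    and P5 = P[THEN conjunct2, THEN conjunct2, THEN conjunct2, THEN conjunct2]
  show ?thesis unfolding category_def opc_simps hom_op
  proof (intro conjI ballI impI)
    fix f assume "f \<in> Mor C"
    then show "cod C f \<in> Obj C" "dom C f \<in> Obj C" using bspec[OF P1] by blast+
  next
    fix a assume "a \<in> Obj C" then show "idm C a \<in> hom C a a" using bspec[OF P2] by blast
  next
    fix f g assume f: "f \<in> Mor C" and g: "g \<in> Mor C" and e: "dom C f = cod C g"
    show "comp C f g \<in> hom C (dom C g) (cod C f)" using bspec[OF bspec[OF P3 g] f] e by simp
  next
    fix f assume f: "f \<in> Mor C"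
    show "comp C (idm C (cod C f)) f = f" using bspec[OF P4 f] by blast
    show "comp C f (idm C (dom C f)) = f" using bspec[OF P4 f] by blast
  next
    fix f g h assume f: "f \<in> Mor C" and g: "g \<in> Mor C" and h: "h \<in> Mor C"
      and e: "dom C f = cod C g \<and> dom C g = cod C h"
    show "comp C (comp C f g) h = comp C f (comp C g h)" using bspec[OF bspec[OF bspec[OF P5 h] g] f] e by simp
  qed
qed

lemma pre_op: assumes "preadditive C" shows "preadditive (opc C)"
proof -
  note P = assms[unfolded preadditive_def]
  note P1 = P[THEN conjunct1] and P2 = P[THEN conjunct2, THEN conjunct1]
    and P3 = P[THEN conjunct2, THEN conjunct2]
  show ?thesis unfolding preadditive_def opc_simps hom_op
  proof (intro conjI)
    show "\<forall>a\<in>Obj C. \<forall>b\<in>Obj C.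
        zero C b a \<in> hom C b a \<and>
        (\<forall>f\<in>hom C b a. \<forall>g\<in>hom C b a. add C f g \<in> hom C b a) \<and>
        (\<forall>f\<in>hom C b a. neg C f \<in> hom C b a) \<and>
        (\<forall>f\<in>hom C b a. \<forall>g\<in>hom C b a. \<forall>h\<in>hom C b a.
            add C (add C f g) h = add C f (add C g h)) \<and>
        (\<forall>f\<in>hom C b a. \<forall>g\<in>hom C b a. add C f g = add C g f) \<and>
        (\<forall>f\<in>hom C b a. add C f (zero C b a) = f) \<and>
        (\<forall>f\<in>hom C b a. add C f (neg C f) = zero C b a)"
    proof (intro ballI)
      fix a b assume "a \<in> Obj C" "b \<in> Obj C"
      show "zero C b a \<in> hom C b a \<and>
        (\<forall>f\<in>hom C b a. \<forall>g\<in>hom C b a. add C f g \<in> hom C b a) \<and>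
        (\<forall>f\<in>hom C b a. neg C f \<in> hom C b a) \<and>
        (\<forall>f\<in>hom C b a. \<forall>g\<in>hom C b a. \<forall>h\<in>hom C b a.
            add C (add C f g) h = add C f (add C g h)) \<and>
        (\<forall>f\<in>hom C b a. \<forall>g\<in>hom C b a. add C f g = add C g f) \<and>
        (\<forall>f\<in>hom C b a. add C f (zero C b a) = f) \<and>
        (\<forall>f\<in>hom C b a. add C f (neg C f) = zero C b a)"
        by (rule bspec[OF bspec[OF P1 \<open>b \<in> Obj C\<close>] \<open>a \<in> Obj C\<close>])
    qed
  next
    show "\<forall>a\<in>Obj C. \<forall>b\<in>Obj C. \<forall>c\<in>Obj C. \<forall>f\<in>hom C b a. \<forall>g\<in>hom C c b. \<forall>g'\<in>hom C c b.
          comp C f (add C g g') = add C (comp C f g) (comp C f g')"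
    proof (intro ballI)
      fix a b c f g g' assume "a \<in> Obj C" "b \<in> Obj C" "c \<in> Obj C" "f \<in> hom C b a"
        "g \<in> hom C c b" "g' \<in> hom C c b"
      then show "comp C f (add C g g') = add C (comp C f g) (comp C f g')"
        using P3[rule_format, of c b a g g' f] by blast
    qed
  next
    show "\<forall>a\<in>Obj C. \<forall>b\<in>Obj C. \<forall>c\<in>Obj C. \<forall>g\<in>hom C b a. \<forall>g'\<in>hom C b a. \<forall>h\<in>hom C c b.
          comp C (add C g g') h = add C (comp C g h) (comp C g' h)"
    proof (intro ballI)
      fix a b c g g' h assume "a \<in> Obj C" "b \<in> Obj C" "c \<in> Obj C" "g \<in> hom C b a"
        "g' \<in> hom C b a" "h \<in> hom C c b"
      then show "comp C (add C g g') h = add C (comp C g h) (comp C g' h)"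
        using P2[rule_format, of c b a h g g'] by blast
    qed
  qed
qed

lemma wab_op: assumes "wab C" shows "wab (opc C)"
proof -
  have c: "category C" and p: "preadditive C" using assms unfolding wab_def by auto
  have k: "\<forall>f \<in> Mor C. (\<exists>k. is_kernel C k f) \<and> (\<exists>c. is_cokernel C c f)"
    and m: "\<forall>m. is_mono C m \<longrightarrow> (\<exists>f. is_kernel C m f)"
    and e: "\<forall>e. is_epi C e \<longrightarrow> (\<exists>f. is_cokernel C e f)" using assms unfolding wab_def by auto
  show ?thesis unfolding wab_def kernel_op cokernel_op mono_op epi_op opc_simps
  proof (intro conjI)
    show "category (opc C)" using cat_op[OF c] .
    show "preadditive (opc C)" using pre_op[OF p] .
    show "\<forall>f \<in> Mor C. (\<exists>k. is_cokernel C k f) \<and> (\<exists>c. is_kernel C c f)" using k by auto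
    show "\<forall>m. is_epi C m \<longrightarrow> (\<exists>f. is_cokernel C m f)" using e by auto
    show "\<forall>e. is_mono C e \<longrightarrow> (\<exists>f. is_kernel C e f)" using m by auto
  qed
qed

lemma abelian_wab: "abelian C \<Longrightarrow> wab C"
  unfolding abelian_def wab_def by blast

theorem theorem2p17:
  fixes C :: "('o, 'm) acat"
  assumes "abelian C"
    and "M \<in> Obj C" and "M' \<in> Obj C" and "N \<in> Obj C" and "N' \<in> Obj C"
    and "r \<in> hom C M M'" and "is_epi C r"
    and "s \<in> hom C N' N" and "is_mono C s"
  shows "(strongly_rickart C M N \<longrightarrow> strongly_rickart C M' N') \<and>
         (dual_strongly_rickart C M N \<longrightarrow> dual_strongly_rickart C M' N')"
proof (intro conjI impI)
  have W: "wabl C" using abelian_wab assms(1) by (simp add: wabl_def)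
  have Wo: "wabl (opc C)" using wab_op[OF abelian_wab[OF assms(1)]] by (simp add: wabl_def)
  show "strongly_rickart C M' N'" if "strongly_rickart C M N"
    using wabl.part1[OF W assms(2-9) that] .
  show "dual_strongly_rickart C M' N'" if "dual_strongly_rickart C M N"
  proof -
    have "strongly_rickart (opc C) N M" using that sr_op by metis
    then have "strongly_rickart (opc C) N' M'"
      using wabl.part1[OF Wo, of N N' M M' s r] assms by (simp add: mono_op epi_op)
    then show ?thesis using sr_op by metis
  qed
qed

end
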